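(* Let $\Omega\subset\mathbb{R}^2$ be open, $(\Omega_n)_{n\in\mathbb{N}}$ non-empty open sets with $\Omega_n\ne\mathbb{R}^2$, $\Omega_n\subset\Omega_{n+1}$, $\Omega=\bigcup_n\Omega_n$ and $d_{n,k}:=\operatorname{dist}(\Omega_n,\partial\Omega_k)>0$ for all $k>n$, and let $\nu_n\colon\Omega\to(0,\infty)$ be continuous with $\nu_n\le\nu_{n+1}$. Suppose that for every $n\in\mathbb{N}$ there is an integer $I_1(n)>n$ such that for every $\varepsilon>0$ there is a compact set $K\subset\overline{\Omega_n}$ with $\nu_n(x)\le\varepsilon\nu_{I_1(n)}(x)$ for all $x\in\Omega_n\setminus K$. Let $n\in\mathbb{N}$. Then $\pi_{I_1(n),n}(\mathcal{D}(\Omega_{I_1(n)}))$ is dense in $\pi_{I_1(n),n}(\mathcal{E}\nu_{I_1(n)}(\Omega_{I_1(n)}))$ with respect to the seminorms $(|\cdot|_{n,m})_{m\in\mathbb{N}_0}$.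
   Context: $\operatorname{dist}(M_0,M_1):=\inf_{x\in M_0,y\in M_1}|x-y|$ (Euclidean norm; $\infty$ if a set is empty). For $n\in\mathbb{N}$, $m\in\mathbb{N}_0$, $f\in\mathcal{C}^\infty(\Omega_n,\mathbb{C})$: $|f|_{n,m}:=\sup_{x\in\Omega_n,\beta\in\mathbb{N}_0^2,|\beta|\le m}|\partial^\beta f(x)|\nu_n(x)$, and $\mathcal{E}\nu_n(\Omega_n)$ is the space of such $f$ with $|f|_{n,m}<\infty$ for all $m$. $\mathcal{D}(U)$ is the space of smooth compactly supported $\mathbb{C}$-valued functions on $U$. $\pi_{k,n}(f):=f|_{\Omega_n}$ for $k\ge n$. *)

theory Defs
  imports "HOL-Analysis.Analysis"
begin

text \<open>Points of the plane are pairs of reals; the product norm on real \<times> real is the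
Euclidean norm. Functions are complex valued.\<close>

definition pd1 :: "(real \<times> real \<Rightarrow> complex) \<Rightarrow> real \<times> real \<Rightarrow> complex" where
  "pd1 f = (\<lambda>(a, b). vector_derivative (\<lambda>t. f (t, b)) (at a))"

definition pd2 :: "(real \<times> real \<Rightarrow> complex) \<Rightarrow> real \<times> real \<Rightarrow> complex" where
  "pd2 f = (\<lambda>(a, b). vector_derivative (\<lambda>t. f (a, t)) (at b))"

definition pd :: "nat \<Rightarrow> nat \<Rightarrow> (real \<times> real \<Rightarrow> complex) \<Rightarrow> real \<times> real \<Rightarrow> complex" where
  "pd i j f = (pd1 ^^ i) ((pd2 ^^ j) f)"

definition smooth_on_set :: "(real \<times> real) set \<Rightarrow> (real \<times> real \<Rightarrow> complex) \<Rightarrow> bool" where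
  "smooth_on_set U f \<longleftrightarrow> (\<forall>i j. pd i j f differentiable_on U)"

definition wsemi :: "(real \<times> real \<Rightarrow> real) \<Rightarrow> (real \<times> real) set \<Rightarrow> nat \<Rightarrow>
    (real \<times> real \<Rightarrow> complex) \<Rightarrow> ereal" where
  "wsemi w U m f = Sup {ereal (norm (pd i j f x) * w x) | x i j. x \<in> U \<and> i + j \<le> m}"

definition Enu :: "(real \<times> real \<Rightarrow> real) \<Rightarrow> (real \<times> real) set \<Rightarrow> (real \<times> real \<Rightarrow> complex) set" where
  "Enu w U = {f. smooth_on_set U f \<and> (\<forall>m. wsemi w U m f < \<infinity>)}"

definition Dtest :: "(real \<times> real) set \<Rightarrow> (real \<times> real \<Rightarrow> complex) set" where
  "Dtest U = {\<phi>. smooth_on_set U \<phi> \<and> compact (closure {x \<in> U. \<phi> x \<noteq> 0})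
                 \<and> closure {x \<in> U. \<phi> x \<noteq> 0} \<subseteq> U}"

end

theory Submission
  imports Defs "HOL-Computational_Algebra.Polynomial"
begin

fun Cn :: "nat \<Rightarrow> (real \<Rightarrow> real) \<Rightarrow> bool" where
  "Cn 0 g = True"
| "Cn (Suc n) g = ((\<forall>x. g differentiable at x) \<and> Cn n (deriv g))"

lemma deriv_eqI: "(\<And>x. (g has_real_derivative g' x) (at x)) \<Longrightarrow> deriv g = g'"
  by (rule ext) (rule DERIV_imp_deriv)

lemma diff_DERIV: "g differentiable at x \<Longrightarrow> (g has_real_derivative deriv g x) (at x)"
  using DERIV_deriv_iff_real_differentiable by blast

lemma Cn_Suc_mono: "Cn (Suc n) g \<Longrightarrow> Cn n g"
  by (induction n arbitrary: g) auto

lemma Cn_const: "Cn n (\<lambda>_. c)"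
proof (induction n arbitrary: c)
  case (Suc n)
  have "deriv (\<lambda>_. c) = (\<lambda>_. 0)" by (rule deriv_eqI) auto
  then show ?case using Suc by simp
qed simp

lemma Cn_add: "Cn n f \<Longrightarrow> Cn n g \<Longrightarrow> Cn n (\<lambda>x. f x + g x)"
proof (induction n arbitrary: f g)
  case (Suc n)
  have dd: "((\<lambda>x. f x + g x) has_real_derivative deriv f x + deriv g x) (at x)" for x
    using Suc.prems by (intro DERIV_add diff_DERIV) auto
  then have "deriv (\<lambda>x. f x + g x) = (\<lambda>x. deriv f x + deriv g x)"
    by (rule deriv_eqI)
  moreover have "\<forall>x. (\<lambda>x. f x + g x) differentiable at x"
    using dd real_differentiable_def by blast
  ultimately show ?case using Suc by simp
qed simp

lemma Cn_mult: "Cn n f \<Longrightarrow> Cn n g \<Longrightarrow> Cn n (\<lambda>x. f x * g x)"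
proof (induction n arbitrary: f g)
  case (Suc n)
  have dd: "((\<lambda>x. f x * g x) has_real_derivative deriv f x * g x + f x * deriv g x) (at x)" for x
    using Suc.prems DERIV_mult[OF diff_DERIV diff_DERIV, of f x g] by (simp add: mult.commute)
  then have "deriv (\<lambda>x. f x * g x) = (\<lambda>x. deriv f x * g x + f x * deriv g x)"
    by (rule deriv_eqI)
  moreover have df: "\<forall>x. (\<lambda>x. f x * g x) differentiable at x"
    using dd real_differentiable_def by blast
  moreover have "Cn n (\<lambda>x. deriv f x * g x + f x * deriv g x)"
  proof -
    have "Cn n f" "Cn n g" using Cn_Suc_mono Suc.prems by blast+
    then show ?thesis using Suc by (intro Cn_add) auto
  qed
  ultimately show ?case using df by simp
qed simp

lemma Cn_affine: "Cn n g \<Longrightarrow> Cn n (\<lambda>x. g (a * x + b))"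
proof (induction n arbitrary: g)
  case (Suc n)
  have d: "deriv (\<lambda>x. g (a * x + b)) = (\<lambda>x. a * deriv g (a * x + b))"
  proof (rule deriv_eqI)
    fix x
    have "(g has_real_derivative deriv g (a * x + b)) (at (a * x + b))"
      using Suc.prems by (auto intro: diff_DERIV)
    moreover have "((\<lambda>x. a * x + b) has_real_derivative a) (at x)"
      by (auto intro!: derivative_eq_intros)
    ultimately have "((\<lambda>x. g (a * x + b)) has_real_derivative deriv g (a * x + b) * a) (at x)"
      by (rule DERIV_chain2)
    then show "((\<lambda>x. g (a * x + b)) has_real_derivative a * deriv g (a * x + b)) (at x)"
      by (auto intro!: derivative_eq_intros simp: mult.commute)
  qed
  have "\<forall>x. (\<lambda>x. g (a * x + b)) differentiable at x"
  proof
    fix x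
    have "(g has_real_derivative deriv g (a * x + b)) (at (a * x + b))"
      using Suc.prems by (auto intro: diff_DERIV)
    moreover have "((\<lambda>x. a * x + b) has_real_derivative a) (at x)"
      by (auto intro!: derivative_eq_intros)
    ultimately have "((\<lambda>x. g (a * x + b)) has_real_derivative deriv g (a * x + b) * a) (at x)"
      by (rule DERIV_chain2)
    then show "(\<lambda>x. g (a * x + b)) differentiable at x" using real_differentiable_def by blast
  qed
  moreover have "Cn n (\<lambda>x. a * deriv g (a * x + b))"
    using Suc by (intro Cn_mult Cn_const) auto
  ultimately show ?case using d by simp
qed simp

lemma Cn_inverse: "Cn n g \<Longrightarrow> (\<And>x. g x \<noteq> 0) \<Longrightarrow> Cn n (\<lambda>x. inverse (g x))"
proof (induction n)
  case (Suc n)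
  have dd: "((\<lambda>x. inverse (g x)) has_real_derivative (-1) * (deriv g x * (inverse (g x) * inverse (g x)))) (at x)" for x
  proof -
    have "(g has_real_derivative deriv g x) (at x)" using Suc.prems by (auto intro: diff_DERIV)
    from DERIV_inverse_fun[OF this Suc.prems(2)]
    show ?thesis by (simp add: power2_eq_square)
  qed
  have "deriv (\<lambda>x. inverse (g x)) = (\<lambda>x. (-1) * (deriv g x * (inverse (g x) * inverse (g x))))"
    using dd by (rule deriv_eqI)
  moreover have "Cn n (\<lambda>x. (-1) * (deriv g x * (inverse (g x) * inverse (g x))))"
  proof -
    have "Cn n (deriv g)" "Cn n g" using Suc.prems Cn_Suc_mono by auto
    then show ?thesis using Suc.IH Suc.prems(2) by (intro Cn_mult Cn_const) auto
  qed
  moreover have "\<forall>x. (\<lambda>x. inverse (g x)) differentiable at x"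
    using dd real_differentiable_def by blast
  ultimately show ?case by simp
qed simp

lemma Cn_deriv_funpow: "Cn (n + k) g \<Longrightarrow> Cn k ((deriv ^^ n) g)"
proof (induction n arbitrary: k)
  case (Suc n)
  from Suc.IH[of "Suc k"] Suc.prems show ?case by simp
qed simp

lemma smooth_DERIV: "(\<forall>n. Cn n g) \<Longrightarrow> ((deriv ^^ n) g has_real_derivative (deriv ^^ Suc n) g x) (at x)"
  using Cn_deriv_funpow[of n 1 g] by (auto intro: diff_DERIV)

definition Ef :: "real poly \<Rightarrow> real \<Rightarrow> real" where
  "Ef p t = (if t \<le> 0 then 0 else poly p (inverse t) * exp (- inverse t))"

definition Qp :: "real poly \<Rightarrow> real poly" where
  "Qp p = [:0, 0, 1:] * (p - pderiv p)"

lemma polyexp_tendsto: "((\<lambda>z::real. poly q z / exp z) \<longlongrightarrow> 0) at_top"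
proof -
  have "((\<lambda>z. \<Sum>i\<le>degree q. coeff q i * (z ^ i / exp z)) \<longlongrightarrow> (\<Sum>i\<le>degree q. coeff q i * 0)) at_top"
    by (intro tendsto_sum tendsto_mult tendsto_const) (simp add: tendsto_power_div_exp_0)
  moreover have "(\<lambda>z. \<Sum>i\<le>degree q. coeff q i * (z ^ i / exp z)) = (\<lambda>z. poly q z / exp z)"
    by (rule ext) (simp add: poly_altdef sum_divide_distrib)
  ultimately show ?thesis by simp
qed

lemma Ef_DERIV: "(Ef p has_real_derivative Ef (Qp p) t) (at t)"
proof (cases "t = 0")
  case True
  have "((\<lambda>y. (Ef p y - Ef p 0) / (y - 0)) \<longlongrightarrow> 0) (at_left 0)"
  proof (rule tendsto_eventually)
    show "\<forall>\<^sub>F y in at_left 0. (Ef p y - Ef p 0) / (y - 0) = 0"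
    proof -
      have "\<forall>\<^sub>F y in at_left 0. y < (0::real)" by (simp add: eventually_at_filter)
      then show ?thesis by eventually_elim (simp add: Ef_def)
    qed
  qed
  moreover have "((\<lambda>y. (Ef p y - Ef p 0) / (y - 0)) \<longlongrightarrow> 0) (at_right 0)"
  proof -
    have "((\<lambda>y. poly (pCons 0 p) (inverse y) / exp (inverse y)) \<longlongrightarrow> 0) (at_right 0)"
      by (rule filterlim_compose[OF polyexp_tendsto filterlim_inverse_at_top_right])
    moreover have "\<forall>\<^sub>F y in at_right 0. poly (pCons 0 p) (inverse y) / exp (inverse y) = (Ef p y - Ef p 0) / (y - 0)"
      using eventually_at_right_less[of "0::real"]
    proof eventually_elim
      case (elim y)
      then show ?case by (simp add: Ef_def exp_minus field_simps)
    qed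
    ultimately show ?thesis by (rule Lim_transform_eventually)
  qed
  ultimately have "((\<lambda>y. (Ef p y - Ef p 0) / (y - 0)) \<longlongrightarrow> 0) (at 0)"
    by (rule filterlim_split_at)
  moreover have "Ef (Qp p) 0 = 0" by (simp add: Ef_def)
  ultimately show ?thesis using True by (simp add: has_field_derivative_iff)
next
  case False
  show ?thesis
  proof (cases "t < 0")
    case True
    have "((\<lambda>_. 0) has_real_derivative 0) (at t)" by simp
    moreover have "Ef (Qp p) t = 0" using True by (simp add: Ef_def)
    ultimately show ?thesis
      apply simp
      by (rule has_field_derivative_transform_within_open[where S="{..<0}"])
         (use True in \<open>auto simp: Ef_def\<close>)
  next
    case False2: False
    then have tp: "t > 0" using False by simp
    have d1: "((\<lambda>t. poly p (inverse t)) has_real_derivative poly (pderiv p) (inverse t) * (- inverse (t ^ 2))) (at t)"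
    proof -
      have "(inverse has_real_derivative - (inverse t * inverse t)) (at t)"
        using tp DERIV_inverse[of t] by (simp add: power2_eq_square)
      from DERIV_chain2[OF poly_DERIV this] show ?thesis by (simp add: power2_eq_square)
    qed
    have d2: "((\<lambda>t. exp (- inverse t)) has_real_derivative exp (- inverse t) * inverse (t ^ 2)) (at t)"
    proof -
      have "((\<lambda>t. - inverse t) has_real_derivative inverse t * inverse t) (at t)"
        using tp DERIV_inverse[of t] DERIV_minus by (fastforce simp: power2_eq_square)
      from DERIV_chain2[OF DERIV_exp this] show ?thesis by (simp add: power2_eq_square)
    qed
    have "((\<lambda>t. poly p (inverse t) * exp (- inverse t)) has_real_derivative
        poly (pderiv p) (inverse t) * (- inverse (t ^ 2)) * exp (- inverse t) + poly p (inverse t) * (exp (- inverse t) * inverse (t ^ 2))) (at t)"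
      using DERIV_mult[OF d1 d2] by (simp add: algebra_simps)
    moreover have "poly (pderiv p) (inverse t) * (- inverse (t ^ 2)) * exp (- inverse t) + poly p (inverse t) * (exp (- inverse t) * inverse (t ^ 2))
        = Ef (Qp p) t"
      using tp by (simp add: Ef_def Qp_def algebra_simps power2_eq_square)
    ultimately have "((\<lambda>t. poly p (inverse t) * exp (- inverse t)) has_real_derivative Ef (Qp p) t) (at t)"
      by simp
    then show ?thesis
      by (rule has_field_derivative_transform_within_open[where S="{0<..}"])
         (use tp in \<open>auto simp: Ef_def\<close>)
  qed
qed

lemma Cn_Ef: "Cn n (Ef p)"
proof (induction n arbitrary: p)
  case (Suc n)
  have "deriv (Ef p) = Ef (Qp p)" using Ef_DERIV by (rule deriv_eqI)
  moreover have "\<forall>x. Ef p differentiable at x" using Ef_DERIV real_differentiable_def by blast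
  ultimately show ?case using Suc by simp
qed simp

definition th :: "real \<Rightarrow> real" where "th = Ef 1"

lemma th_pos: "t > 0 \<Longrightarrow> th t > 0" and th_zero: "t \<le> 0 \<Longrightarrow> th t = 0"
  by (auto simp: th_def Ef_def)

definition Gs :: "real \<Rightarrow> real" where
  "Gs t = th t * inverse (th t + th (-1 * t + 1))"

lemma Cn_Gs: "Cn n Gs"
proof -
  have c1: "Cn n th" by (simp add: th_def Cn_Ef)
  have c3: "Cn n (\<lambda>t. th t + th (-1 * t + 1))" by (rule Cn_add[OF c1 Cn_affine[OF c1]])
  have nz: "th t + th (-1 * t + 1) \<noteq> 0" for t
  proof (cases "t > 0")
    case True
    then have "th t > 0" by (rule th_pos)
    moreover have "th (-1 * t + 1) \<ge> 0" using th_pos th_zero by (metis less_eq_real_def not_le)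
    ultimately show ?thesis by linarith
  next
    case False
    then have "th (-1 * t + 1) > 0" by (intro th_pos) simp
    moreover have "th t \<ge> 0" using th_pos th_zero by (metis less_eq_real_def not_le)
    ultimately show ?thesis by linarith
  qed
  have "Cn n (\<lambda>t. th t * inverse (th t + th (-1 * t + 1)))"
    by (rule Cn_mult[OF c1 Cn_inverse[OF c3 nz]])
  then show ?thesis unfolding Gs_def[abs_def] .
qed

lemma Gs0: "t \<le> 0 \<Longrightarrow> Gs t = 0" by (simp add: Gs_def th_zero)
lemma Gs1: "t \<ge> 1 \<Longrightarrow> Gs t = 1"
  using th_pos[of t] by (simp add: Gs_def th_zero)

definition hb :: "real \<Rightarrow> real" where "hb t = Gs (1 * t + 1) - Gs t"

lemma Cn_hb: "Cn n hb"
proof -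
  have "Cn n (\<lambda>t. Gs (1 * t + 1) + (-1) * Gs t)"
    by (intro Cn_add Cn_mult Cn_const Cn_affine Cn_Gs)
  then show ?thesis unfolding hb_def[abs_def] by simp
qed

lemma hb_zero: "\<bar>t\<bar> \<ge> 1 \<Longrightarrow> hb t = 0"
  by (cases "t \<ge> 1") (auto simp: hb_def Gs0 Gs1)

lemma hb_tele: "0 \<le> r \<Longrightarrow> r < 1 \<Longrightarrow> hb (r + 1) + hb r + hb (r - 1) = 1"
  by (simp add: hb_def Gs0 Gs1)

lemma pd_Suc1: "pd (Suc i) j f = pd1 (pd i j f)" by (simp add: pd_def)
lemma pd_0_Suc: "pd 0 (Suc j) f = pd2 (pd 0 j f)" by (simp add: pd_def)
lemma pd_00: "pd 0 0 f = f" by (simp add: pd_def)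

lemma pd1_eq: "pd1 F x = vector_derivative (\<lambda>t. F (t, snd x)) (at (fst x))"
  by (cases x) (simp add: pd1_def)
lemma pd2_eq: "pd2 F x = vector_derivative (\<lambda>t. F (fst x, t)) (at (snd x))"
  by (cases x) (simp add: pd2_def)

lemma pd1_at: "((\<lambda>t. F (t, snd x)) has_vector_derivative D) (at (fst x)) \<Longrightarrow> pd1 F x = D"
  by (simp add: pd1_eq vector_derivative_at)
lemma pd2_at: "((\<lambda>t. F (fst x, t)) has_vector_derivative D) (at (snd x)) \<Longrightarrow> pd2 F x = D"
  by (simp add: pd2_eq vector_derivative_at)

lemma diff_pd1:
  fixes F :: "real \<times> real \<Rightarrow> complex"
  assumes "F differentiable (at x)"
  shows "((\<lambda>t. F (t, snd x)) has_vector_derivative pd1 F x) (at (fst x))"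
proof -
  obtain D where D: "(F has_derivative D) (at x)" using assms differentiable_def by blast
  have p: "((\<lambda>t. (t, snd x)) has_derivative (\<lambda>h. (h, 0))) (at (fst x))"
    by (rule has_derivative_Pair[OF has_derivative_ident has_derivative_const])
  have "((\<lambda>t. F (t, snd x)) has_derivative (\<lambda>h. D (h, 0))) (at (fst x))"
    using has_derivative_compose[OF p, of F D] D by simp
  moreover have e: "(\<lambda>h. D (h, 0)) = (\<lambda>h. h *\<^sub>R D (1, 0))"
  proof
    fix h
    have "linear D" using D has_derivative_linear by blast
    then have "D (h *\<^sub>R (1, 0)) = h *\<^sub>R D (1, 0)" by (rule linear_scale)
    then show "D (h, 0) = h *\<^sub>R D (1, 0)" by simp
  qed
  ultimately have v: "((\<lambda>t. F (t, snd x)) has_vector_derivative D (1, 0)) (at (fst x))"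
    unfolding has_vector_derivative_def by (simp only: e)
  then have "pd1 F x = D (1, 0)" by (rule pd1_at)
  then show ?thesis using v by simp
qed

lemma diff_pd2:
  fixes F :: "real \<times> real \<Rightarrow> complex"
  assumes "F differentiable (at x)"
  shows "((\<lambda>t. F (fst x, t)) has_vector_derivative pd2 F x) (at (snd x))"
proof -
  obtain D where D: "(F has_derivative D) (at x)" using assms differentiable_def by blast
  have p: "((\<lambda>t. (fst x, t)) has_derivative (\<lambda>h. (0, h))) (at (snd x))"
    by (rule has_derivative_Pair[OF has_derivative_const has_derivative_ident])
  have "((\<lambda>t. F (fst x, t)) has_derivative (\<lambda>h. D (0, h))) (at (snd x))"
    using has_derivative_compose[OF p, of F D] D by simp
  moreover have e: "(\<lambda>h. D (0, h)) = (\<lambda>h. h *\<^sub>R D (0, 1))"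
  proof
    fix h
    have "linear D" using D has_derivative_linear by blast
    then have "D (h *\<^sub>R (0, 1)) = h *\<^sub>R D (0, 1)" by (rule linear_scale)
    then show "D (0, h) = h *\<^sub>R D (0, 1)" by simp
  qed
  ultimately have v: "((\<lambda>t. F (fst x, t)) has_vector_derivative D (0, 1)) (at (snd x))"
    unfolding has_vector_derivative_def by (simp only: e)
  then have "pd2 F x = D (0, 1)" by (rule pd2_at)
  then show ?thesis using v by simp
qed

lemma pd1_cong:
  assumes "open W" "x \<in> W" "\<And>y. y \<in> W \<Longrightarrow> F y = G y"
  shows "pd1 F x = pd1 G x"
proof -
  have c: "\<And>t. continuous (at t) (\<lambda>t. (t, snd x))" by (intro continuous_intros)
  have o: "open ((\<lambda>t. (t, snd x)) -` W)" by (rule continuous_open_vimage[OF assms(1) c])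
  have "eventually (\<lambda>t. t \<in> UNIV \<longrightarrow> F (t, snd x) = G (t, snd x)) (nhds (fst x))"
    unfolding eventually_nhds
    apply (rule exI[of _ "(\<lambda>t. (t, snd x)) -` W"])
    using o assms(2,3) by simp
  then show ?thesis unfolding pd1_eq by (rule vector_derivative_cong_eq) simp_all
qed

lemma pd2_cong:
  assumes "open W" "x \<in> W" "\<And>y. y \<in> W \<Longrightarrow> F y = G y"
  shows "pd2 F x = pd2 G x"
proof -
  have c: "\<And>t. continuous (at t) (\<lambda>t. (fst x, t))" by (intro continuous_intros)
  have o: "open ((\<lambda>t. (fst x, t)) -` W)" by (rule continuous_open_vimage[OF assms(1) c])
  have "eventually (\<lambda>t. t \<in> UNIV \<longrightarrow> F (fst x, t) = G (fst x, t)) (nhds (snd x))"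
    unfolding eventually_nhds
    apply (rule exI[of _ "(\<lambda>t. (fst x, t)) -` W"])
    using o assms(2,3) by simp
  then show ?thesis unfolding pd2_eq by (rule vector_derivative_cong_eq) simp_all
qed

inductive rep :: "(real \<times> real \<Rightarrow> complex) \<Rightarrow> (real \<times> real \<Rightarrow> complex) \<Rightarrow> bool \<Rightarrow> nat \<Rightarrow> nat
    \<Rightarrow> (real \<times> real \<Rightarrow> complex) \<Rightarrow> bool" for a f b m where
  base: "p + q \<le> m \<Longrightarrow> p' + q' \<le> m \<Longrightarrow> (b \<longrightarrow> p = 0 \<and> p' = 0)
     \<Longrightarrow> rep a f b m 1 (\<lambda>x. pd p q a x * pd p' q' f x)"
| add: "rep a f b m N1 g1 \<Longrightarrow> rep a f b m N2 g2 \<Longrightarrow> rep a f b m (N1 + N2) (\<lambda>x. g1 x + g2 x)"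

lemma rep_bound:
  assumes "rep a f b m N g"
    and "\<And>p q. p + q \<le> m \<Longrightarrow> norm (pd p q a x) \<le> R"
    and "\<And>p q. p + q \<le> m \<Longrightarrow> norm (pd p q f x) \<le> P"
  shows "norm (g x) \<le> N * R * P"
  using assms(1)
proof induction
  case (base p q p' q')
  have R: "0 \<le> R" using assms(2)[of 0 0] by (intro order_trans[OF norm_ge_zero]) simp
  have "norm (pd p q a x * pd p' q' f x) = norm (pd p q a x) * norm (pd p' q' f x)"
    by (simp add: norm_mult)
  also have "\<dots> \<le> R * P"
    using R by (intro mult_mono assms(2) assms(3) norm_ge_zero) (use base in auto)
  finally show ?case by simp
next
  case (add N1 g1 N2 g2)
  have "norm (g1 x + g2 x) \<le> norm (g1 x) + norm (g2 x)" by (rule norm_triangle_ineq)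
  also have "\<dots> \<le> N1 * R * P + N2 * R * P" using add by linarith
  finally show ?case by (simp add: algebra_simps)
qed

lemma rep_False: "rep a f True m N g \<Longrightarrow> rep a f False m N g"
proof (induction rule: rep.induct)
  case (base p q p' q')
  then show ?case by (intro rep.base) auto
next
  case (add N1 g1 N2 g2)
  show ?case by (rule rep.add[OF add.IH])
qed

context
  fixes U a f
  assumes U: "open U" and sa: "smooth_on_set U a" and sf: "smooth_on_set U f"
begin

lemma pd_a_at: "x \<in> U \<Longrightarrow> pd p q a differentiable (at x)"
  using sa U unfolding smooth_on_set_def by (meson differentiable_on_eq_differentiable_at)
lemma pd_f_at: "x \<in> U \<Longrightarrow> pd p q f differentiable (at x)"
  using sf U unfolding smooth_on_set_def by (meson differentiable_on_eq_differentiable_at)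

lemma rep_diff: "rep a f b m N g \<Longrightarrow> g differentiable_on U"
proof (induction rule: rep.induct)
  case (base p q p' q')
  have "pd p q a differentiable_on U" "pd p' q' f differentiable_on U"
    using sa sf unfolding smooth_on_set_def by auto
  then show ?case by (rule differentiable_on_mult)
next
  case (add N1 g1 N2 g2)
  then show ?case by (intro differentiable_on_add) auto
qed

lemma rep_d1: "rep a f b m N g \<Longrightarrow> \<exists>g'. rep a f False (Suc m) (2 * N) g' \<and>
   (\<forall>x\<in>U. ((\<lambda>t. g (t, snd x)) has_vector_derivative g' x) (at (fst x)))"
proof (induction rule: rep.induct)
  case (base p q p' q')
  define g' where "g' = (\<lambda>x. (\<lambda>x. pd (Suc p) q a x * pd p' q' f x) x + (\<lambda>x. pd p q a x * pd (Suc p') q' f x) x)"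
  have r: "rep a f False (Suc m) (1 + 1) g'"
    unfolding g'_def using base by (intro rep.add rep.base) auto
  have "((\<lambda>t. pd p q a (t, snd x) * pd p' q' f (t, snd x)) has_vector_derivative g' x) (at (fst x))"
    if x: "x \<in> U" for x
  proof -
    have A: "((\<lambda>t. pd p q a (t, snd x)) has_vector_derivative pd (Suc p) q a x) (at (fst x))"
      using diff_pd1[OF pd_a_at[OF x]] by (simp add: pd_Suc1)
    have B: "((\<lambda>t. pd p' q' f (t, snd x)) has_vector_derivative pd (Suc p') q' f x) (at (fst x))"
      using diff_pd1[OF pd_f_at[OF x]] by (simp add: pd_Suc1)
    from has_vector_derivative_mult[OF A B] show ?thesis
      by (simp add: g'_def algebra_simps)
  qed
  moreover have r': "rep a f False (Suc m) (2 * 1) g'" using r by (metis one_add_one mult_1_right)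
  ultimately show ?case by blast
next
  case (add N1 g1 N2 g2)
  then obtain g1' g2' where
    1: "rep a f False (Suc m) (2 * N1) g1'" "\<forall>x\<in>U. ((\<lambda>t. g1 (t, snd x)) has_vector_derivative g1' x) (at (fst x))" and
    2: "rep a f False (Suc m) (2 * N2) g2'" "\<forall>x\<in>U. ((\<lambda>t. g2 (t, snd x)) has_vector_derivative g2' x) (at (fst x))"
    by blast
  have "rep a f False (Suc m) (2 * N1 + 2 * N2) (\<lambda>x. g1' x + g2' x)"
    using 1 2 by (intro rep.add) auto
  moreover have "\<forall>x\<in>U. ((\<lambda>t. g1 (t, snd x) + g2 (t, snd x)) has_vector_derivative g1' x + g2' x) (at (fst x))"
    using 1 2 by (auto intro: has_vector_derivative_add)
  ultimately show ?case by (intro exI[of _ "\<lambda>x. g1' x + g2' x"]) (simp add: algebra_simps)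
qed

lemma rep_d2: "rep a f True m N g \<Longrightarrow> \<exists>g'. rep a f True (Suc m) (2 * N) g' \<and>
   (\<forall>x\<in>U. ((\<lambda>t. g (fst x, t)) has_vector_derivative g' x) (at (snd x)))"
proof (induction rule: rep.induct)
  case (base p q p' q')
  then have p0: "p = 0" "p' = 0" by auto
  define g' where "g' = (\<lambda>x. (\<lambda>x. pd 0 (Suc q) a x * pd 0 q' f x) x + (\<lambda>x. pd 0 q a x * pd 0 (Suc q') f x) x)"
  have r: "rep a f True (Suc m) (1 + 1) g'"
    unfolding g'_def using base p0 by (intro rep.add rep.base) auto
  have "((\<lambda>t. pd 0 q a (fst x, t) * pd 0 q' f (fst x, t)) has_vector_derivative g' x) (at (snd x))"
    if x: "x \<in> U" for x
  proof -
    have A: "((\<lambda>t. pd 0 q a (fst x, t)) has_vector_derivative pd 0 (Suc q) a x) (at (snd x))"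
      using diff_pd2[OF pd_a_at[OF x]] by (simp add: pd_0_Suc)
    have B: "((\<lambda>t. pd 0 q' f (fst x, t)) has_vector_derivative pd 0 (Suc q') f x) (at (snd x))"
      using diff_pd2[OF pd_f_at[OF x]] by (simp add: pd_0_Suc)
    from has_vector_derivative_mult[OF A B] show ?thesis
      by (simp add: g'_def algebra_simps)
  qed
  moreover have r': "rep a f True (Suc m) (2 * 1) g'" using r by (metis one_add_one mult_1_right)
  ultimately show ?case using p0 by blast
next
  case (add N1 g1 N2 g2)
  then obtain g1' g2' where
    1: "rep a f True (Suc m) (2 * N1) g1'" "\<forall>x\<in>U. ((\<lambda>t. g1 (fst x, t)) has_vector_derivative g1' x) (at (snd x))" and
    2: "rep a f True (Suc m) (2 * N2) g2'" "\<forall>x\<in>U. ((\<lambda>t. g2 (fst x, t)) has_vector_derivative g2' x) (at (snd x))"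
    by blast
  have "rep a f True (Suc m) (2 * N1 + 2 * N2) (\<lambda>x. g1' x + g2' x)"
    using 1 2 by (intro rep.add) auto
  moreover have "\<forall>x\<in>U. ((\<lambda>t. g1 (fst x, t) + g2 (fst x, t)) has_vector_derivative g1' x + g2' x) (at (snd x))"
    using 1 2 by (auto intro: has_vector_derivative_add)
  ultimately show ?case by (intro exI[of _ "\<lambda>x. g1' x + g2' x"]) (simp add: algebra_simps)
qed

lemma rep_pd0: "\<exists>g. rep a f True j (2 ^ j) g \<and> (\<forall>x\<in>U. pd 0 j (\<lambda>x. a x * f x) x = g x)"
proof (induction j)
  case 0
  have "rep a f True 0 1 (\<lambda>x. pd 0 0 a x * pd 0 0 f x)" by (rule rep.base) auto
  then show ?case by (intro exI[of _ "\<lambda>x. pd 0 0 a x * pd 0 0 f x"]) (simp add: pd_00)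
next
  case (Suc j)
  then obtain g where g: "rep a f True j (2 ^ j) g" "\<forall>x\<in>U. pd 0 j (\<lambda>x. a x * f x) x = g x" by blast
  obtain g' where g': "rep a f True (Suc j) (2 * 2 ^ j) g'"
    "\<forall>x\<in>U. ((\<lambda>t. g (fst x, t)) has_vector_derivative g' x) (at (snd x))"
    using rep_d2[OF g(1)] by blast
  have "pd 0 (Suc j) (\<lambda>x. a x * f x) x = g' x" if x: "x \<in> U" for x
  proof -
    have "pd 0 (Suc j) (\<lambda>x. a x * f x) x = pd2 g x"
      unfolding pd_0_Suc by (rule pd2_cong[OF U x]) (use g(2) in auto)
    also have "\<dots> = g' x" using g'(2) x by (intro pd2_at) auto
    finally show ?thesis .
  qed
  then show ?case using g' by (intro exI[of _ g']) simp
qed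

lemma rep_pd: "\<exists>g. rep a f False (i + j) (2 ^ (i + j)) g \<and> (\<forall>x\<in>U. pd i j (\<lambda>x. a x * f x) x = g x)"
proof (induction i)
  case 0
  obtain g where "rep a f True j (2 ^ j) g" "\<forall>x\<in>U. pd 0 j (\<lambda>x. a x * f x) x = g x"
    using rep_pd0[of j] by blast
  then show ?case by (intro exI[of _ g] conjI) (simp_all add: rep_False)
next
  case (Suc i)
  then obtain g where g: "rep a f False (i + j) (2 ^ (i + j)) g" "\<forall>x\<in>U. pd i j (\<lambda>x. a x * f x) x = g x" by blast
  obtain g' where g': "rep a f False (Suc (i + j)) (2 * 2 ^ (i + j)) g'"
    "\<forall>x\<in>U. ((\<lambda>t. g (t, snd x)) has_vector_derivative g' x) (at (fst x))"
    using rep_d1[OF g(1)] by blast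
  have "pd (Suc i) j (\<lambda>x. a x * f x) x = g' x" if x: "x \<in> U" for x
  proof -
    have "pd (Suc i) j (\<lambda>x. a x * f x) x = pd1 g x"
      unfolding pd_Suc1 by (rule pd1_cong[OF U x]) (use g(2) in auto)
    also have "\<dots> = g' x" using g'(2) x by (intro pd1_at) auto
    finally show ?thesis .
  qed
  then show ?case using g' by (intro exI[of _ g']) simp
qed

lemma smooth_mult: "smooth_on_set U (\<lambda>x. a x * f x)"
  unfolding smooth_on_set_def
proof (intro allI)
  fix i j
  obtain g where g: "rep a f False (i + j) (2 ^ (i + j)) g" "\<forall>x\<in>U. pd i j (\<lambda>x. a x * f x) x = g x"
    using rep_pd by blast
  have "g differentiable_on U" using g(1) by (rule rep_diff)
  show "pd i j (\<lambda>x. a x * f x) differentiable_on U"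
    unfolding differentiable_on_def
  proof
    fix x assume x: "x \<in> U"
    from \<open>g differentiable_on U\<close> x obtain D where D: "(g has_derivative D) (at x within U)"
      by (auto simp: differentiable_on_def differentiable_def)
    have "(pd i j (\<lambda>x. a x * f x) has_derivative D) (at x within U)"
      by (rule has_derivative_transform[OF x _ D]) (use g(2) in auto)
    then show "pd i j (\<lambda>x. a x * f x) differentiable at x within U" by (rule differentiableI)
  qed
qed

lemma pd_mult_bound:
  assumes "x \<in> U" "i + j \<le> m"
    and "\<And>p q. p + q \<le> m \<Longrightarrow> norm (pd p q a x) \<le> R"
    and "\<And>p q. p + q \<le> m \<Longrightarrow> norm (pd p q f x) \<le> P"
  shows "norm (pd i j (\<lambda>x. a x * f x) x) \<le> 2 ^ m * R * P"
proof -
  obtain g where g: "rep a f False (i + j) (2 ^ (i + j)) g" "\<forall>x\<in>U. pd i j (\<lambda>x. a x * f x) x = g x"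
    using rep_pd by blast
  have R: "0 \<le> R" using assms(3)[of 0 0] by (intro order_trans[OF norm_ge_zero]) simp
  have P: "0 \<le> P" using assms(4)[of 0 0] by (intro order_trans[OF norm_ge_zero]) simp
  have "norm (g x) \<le> real (2 ^ (i + j)) * R * P"
    by (rule rep_bound[OF g(1)]) (use assms(2,3,4) in auto)
  also have "\<dots> \<le> 2 ^ m * R * P"
  proof -
    have "real (2 ^ (i + j)) \<le> 2 ^ m" using assms(2) by (simp add: power_increasing)
    then show ?thesis using R P by (intro mult_right_mono) auto
  qed
  finally show ?thesis using g(2) assms(1) by simp
qed

end

definition Dh :: "nat \<Rightarrow> real \<Rightarrow> real" where "Dh n = (deriv ^^ n) hb"

lemma Dh_DERIV: "(Dh n has_real_derivative Dh (Suc n) x) (at x)"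
  unfolding Dh_def by (rule smooth_DERIV) (simp add: Cn_hb)

lemma Dh_zero: "1 < \<bar>t\<bar> \<Longrightarrow> Dh n t = 0"
proof (induction n arbitrary: t)
  case 0
  then show ?case by (simp add: Dh_def hb_zero)
next
  case (Suc n)
  define W where "W = {..<(-1::real)} \<union> {1<..}"
  have W: "open W" "t \<in> W" using Suc.prems by (auto simp: W_def)
  have "((\<lambda>_. 0) has_real_derivative 0) (at t)" by simp
  then have "(Dh n has_real_derivative 0) (at t)"
    by (rule has_field_derivative_transform_within_open[OF _ W]) (use Suc.IH in \<open>auto simp: W_def\<close>)
  then show ?case using Dh_DERIV[of n t] DERIV_unique by blast
qed

lemma Dh_bound: "\<exists>M. \<forall>t. \<bar>Dh n t\<bar> \<le> M"
proof -
  have "continuous_on {-1..1} (Dh n)"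
    using Dh_DERIV by (intro continuous_at_imp_continuous_on) (blast intro: DERIV_isCont)
  then have "compact (Dh n ` {-1..1})" by (intro compact_continuous_image) auto
  then obtain M where M: "\<And>y. y \<in> Dh n ` {-1..1} \<Longrightarrow> norm y \<le> M"
    using compact_imp_bounded bounded_iff by metis
  have "\<bar>Dh n t\<bar> \<le> max M 0" for t
  proof (cases "1 < \<bar>t\<bar>")
    case True then show ?thesis by (simp add: Dh_zero)
  next
    case False then have "t \<in> {-1..1}" by auto
    then show ?thesis using M[of "Dh n t"] by auto
  qed
  then show ?thesis by blast
qed

definition Kf :: "real \<Rightarrow> (int \<times> int) set \<Rightarrow> nat \<Rightarrow> nat \<Rightarrow> real \<times> real \<Rightarrow> real" where
  "Kf c S a b x = (\<Sum>p\<in>S. c ^ (a + b) * (Dh a (c * fst x - of_int (fst p)) * Dh b (c * snd x - of_int (snd p))))"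

lemma Dh_aff: "((\<lambda>t. Dh a (c * t - r)) has_real_derivative Dh (Suc a) (c * t - r) * c) (at t)"
proof -
  have "((\<lambda>t. c * t - r) has_real_derivative c) (at t)"
    by (auto intro!: derivative_eq_intros)
  from DERIV_chain2[OF Dh_DERIV this] show ?thesis .
qed

lemma Kf_d1: "((\<lambda>t. Kf c S a b (t, snd x)) has_real_derivative Kf c S (Suc a) b x) (at (fst x))"
proof -
  have "((\<lambda>t. \<Sum>p\<in>S. c ^ (a + b) * (Dh a (c * t - of_int (fst p)) * Dh b (c * snd x - of_int (snd p))))
     has_real_derivative (\<Sum>p\<in>S. c ^ (a + b) * ((Dh (Suc a) (c * fst x - of_int (fst p)) * c) * Dh b (c * snd x - of_int (snd p))))) (at (fst x))"
    by (intro DERIV_sum DERIV_cmult DERIV_cmult_right Dh_aff)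
  moreover have "(\<Sum>p\<in>S. c ^ (a + b) * ((Dh (Suc a) (c * fst x - of_int (fst p)) * c) * Dh b (c * snd x - of_int (snd p))))
      = Kf c S (Suc a) b x"
    unfolding Kf_def by (intro sum.cong refl) (simp add: algebra_simps)
  ultimately show ?thesis unfolding Kf_def by simp
qed

lemma Kf_d2: "((\<lambda>t. Kf c S a b (fst x, t)) has_real_derivative Kf c S a (Suc b) x) (at (snd x))"
proof -
  have "((\<lambda>t. \<Sum>p\<in>S. c ^ (a + b) * (Dh a (c * fst x - of_int (fst p)) * Dh b (c * t - of_int (snd p))))
     has_real_derivative (\<Sum>p\<in>S. c ^ (a + b) * (Dh a (c * fst x - of_int (fst p)) * (Dh (Suc b) (c * snd x - of_int (snd p)) * c)))) (at (snd x))"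
    by (intro DERIV_sum DERIV_cmult Dh_aff)
  moreover have "(\<Sum>p\<in>S. c ^ (a + b) * (Dh a (c * fst x - of_int (fst p)) * (Dh (Suc b) (c * snd x - of_int (snd p)) * c)))
      = Kf c S a (Suc b) x"
    unfolding Kf_def by (intro sum.cong refl) (simp add: algebra_simps)
  ultimately show ?thesis unfolding Kf_def by simp
qed

lemma Dh_differentiable: "Dh a differentiable (at t)"
  using Dh_DERIV real_differentiable_def by blast

lemma Kf_differentiable: "Kf c S a b differentiable (at x)"
proof -
  have l1: "(\<lambda>x. c * fst x - of_int i) differentiable (at x)" for x :: "real \<times> real" and i :: int
    by (intro differentiable_diff differentiable_mult differentiable_const)
       (simp add: bounded_linear_imp_differentiable bounded_linear_fst)
  have l2: "(\<lambda>x. c * snd x - of_int i) differentiable (at x)" for x :: "real \<times> real" and i :: int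
    by (intro differentiable_diff differentiable_mult differentiable_const)
       (simp add: bounded_linear_imp_differentiable bounded_linear_snd)
  have t: "(\<lambda>x. c ^ (a + b) * (Dh a (c * fst x - of_int (fst p)) * Dh b (c * snd x - of_int (snd p)))) differentiable (at x)" for p
    by (intro differentiable_mult differentiable_const
        differentiable_compose[OF Dh_differentiable l1] differentiable_compose[OF Dh_differentiable l2])
  have "(\<lambda>x. \<Sum>p\<in>S. c ^ (a + b) * (Dh a (c * fst x - of_int (fst p)) * Dh b (c * snd x - of_int (snd p)))) differentiable (at x)"
  proof (cases "finite S")
    case True
    then show ?thesis by (intro differentiable_sum) (use t in auto)
  qed simp
  then show ?thesis unfolding Kf_def[abs_def] .
qed

definition Kd :: "real \<Rightarrow> (int \<times> int) set \<Rightarrow> real \<Rightarrow> nat \<Rightarrow> nat \<Rightarrow> real \<times> real \<Rightarrow> real" where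
  "Kd c S d a b x = Kf c S a b x - (if a = 0 \<and> b = 0 then d else 0)"

lemma Kd_d1: "((\<lambda>t. Kd c S d a b (t, snd x)) has_real_derivative Kd c S d (Suc a) b x) (at (fst x))"
  unfolding Kd_def using DERIV_diff[OF Kf_d1 DERIV_const] by simp
lemma Kd_d2: "((\<lambda>t. Kd c S d a b (fst x, t)) has_real_derivative Kd c S d a (Suc b) x) (at (snd x))"
  unfolding Kd_def using DERIV_diff[OF Kf_d2 DERIV_const] by simp
lemma Kd_differentiable: "Kd c S d a b differentiable (at x)"
  unfolding Kd_def[abs_def] by (intro differentiable_diff Kf_differentiable differentiable_const)

lemma pd_ofreal:
  fixes F :: "nat \<Rightarrow> nat \<Rightarrow> real \<times> real \<Rightarrow> real"
  assumes d1: "\<And>a b x. ((\<lambda>t. F a b (t, snd x)) has_real_derivative F (Suc a) b x) (at (fst x))"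
    and d2: "\<And>a b x. ((\<lambda>t. F a b (fst x, t)) has_real_derivative F a (Suc b) x) (at (snd x))"
  shows "pd a b (\<lambda>x. complex_of_real (F 0 0 x)) = (\<lambda>x. complex_of_real (F a b x))"
proof -
  have s2: "(pd2 ^^ b) (\<lambda>x. complex_of_real (F 0 0 x)) = (\<lambda>x. complex_of_real (F 0 b x))" for b
  proof (induction b)
    case (Suc b)
    have "pd2 (\<lambda>x. complex_of_real (F 0 b x)) = (\<lambda>x. complex_of_real (F 0 (Suc b) x))"
      by (rule ext, rule pd2_at, rule has_vector_derivative_of_real, rule d2)
    then show ?case using Suc by simp
  qed simp
  have s1: "(pd1 ^^ a) (\<lambda>x. complex_of_real (F 0 b x)) = (\<lambda>x. complex_of_real (F a b x))" for a
  proof (induction a)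
    case (Suc a)
    have "pd1 (\<lambda>x. complex_of_real (F a b x)) = (\<lambda>x. complex_of_real (F (Suc a) b x))"
      by (rule ext, rule pd1_at, rule has_vector_derivative_of_real, rule d1)
    then show ?case using Suc by simp
  qed simp
  show ?thesis unfolding pd_def s2 s1 ..
qed

lemma pd_Kd: "pd a b (\<lambda>x. complex_of_real (Kd c S d 0 0 x)) = (\<lambda>x. complex_of_real (Kd c S d a b x))"
  using pd_ofreal[of "Kd c S d", OF Kd_d1 Kd_d2] .

lemma smooth_Kd: "smooth_on_set U (\<lambda>x. complex_of_real (Kd c S d 0 0 x))"
  unfolding smooth_on_set_def pd_Kd
proof (intro allI)
  fix i j
  have "(\<lambda>x. complex_of_real (Kd c S d i j x)) differentiable (at x)" for x
    by (rule differentiable_compose[OF _ Kd_differentiable])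
       (simp add: bounded_linear_imp_differentiable bounded_linear_of_real)
  then show "(\<lambda>x. complex_of_real (Kd c S d i j x)) differentiable_on U"
    by (simp add: differentiable_at_imp_differentiable_on)
qed

definition near :: "real \<Rightarrow> int set" where "near t = {\<lfloor>t\<rfloor> - 1, \<lfloor>t\<rfloor>, \<lfloor>t\<rfloor> + 1}"

lemma not_near: "i \<notin> near t \<Longrightarrow> 1 < \<bar>t - of_int i\<bar>"
proof -
  assume "i \<notin> near t"
  then have "i \<le> \<lfloor>t\<rfloor> - 2 \<or> i \<ge> \<lfloor>t\<rfloor> + 2" by (auto simp: near_def)
  then have "of_int i \<le> of_int \<lfloor>t\<rfloor> - (2::real) \<or> of_int i \<ge> of_int \<lfloor>t\<rfloor> + (2::real)"
    by (metis of_int_add of_int_diff of_int_le_iff of_int_numeral)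
  moreover have "of_int \<lfloor>t\<rfloor> \<le> t" "t < of_int \<lfloor>t\<rfloor> + 1" by linarith+
  ultimately show ?thesis by linarith
qed

lemma card_near: "card (near t) \<le> 3"
proof -
  have "card (near t) = card (set [\<lfloor>t\<rfloor> - 1, \<lfloor>t\<rfloor>, \<lfloor>t\<rfloor> + 1])" by (simp add: near_def)
  also have "\<dots> \<le> 3" using card_length[of "[\<lfloor>t\<rfloor> - 1, \<lfloor>t\<rfloor>, \<lfloor>t\<rfloor> + 1]"] by simp
  finally show ?thesis .
qed

lemma finite_near: "finite (near t)" by (simp add: near_def)

lemma sum_near: "(\<Sum>i\<in>near t. hb (t - of_int i)) = 1"
proof -
  define f where "f = \<lfloor>t\<rfloor>"
  define r where "r = t - of_int f"
  have r: "0 \<le> r" "r < 1" unfolding r_def f_def by linarith+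
  have "(\<Sum>i\<in>near t. hb (t - of_int i)) = hb (r + 1) + hb r + hb (r - 1)"
    unfolding near_def f_def[symmetric] by (simp add: r_def algebra_simps)
  also have "\<dots> = 1" using hb_tele r by blast
  finally show ?thesis .
qed

definition Tn :: "real \<Rightarrow> real \<times> real \<Rightarrow> (int \<times> int) set" where
  "Tn c x = near (c * fst x) \<times> near (c * snd x)"

lemma term_zero:
  assumes "p \<notin> Tn c x"
  shows "Dh a (c * fst x - of_int (fst p)) * Dh b (c * snd x - of_int (snd p)) = 0"
proof -
  from assms have "fst p \<notin> near (c * fst x) \<or> snd p \<notin> near (c * snd x)"
    by (cases p) (auto simp: Tn_def)
  then show ?thesis using not_near Dh_zero by auto
qed

lemma Kf_local: "finite S \<Longrightarrow> Kf c S a b x = (\<Sum>p\<in>S \<inter> Tn c x. c ^ (a + b) * (Dh a (c * fst x - of_int (fst p)) * Dh b (c * snd x - of_int (snd p))))"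
  unfolding Kf_def by (rule sum.mono_neutral_right) (auto simp: term_zero)

lemma Kf_bound:
  assumes "finite S" "c > 0" "\<And>t. \<bar>Dh a t\<bar> \<le> Ma" "\<And>t. \<bar>Dh b t\<bar> \<le> Mb"
  shows "\<bar>Kf c S a b x\<bar> \<le> 9 * (c ^ (a + b) * (Ma * Mb))"
proof -
  have Ma: "0 \<le> Ma" using assms(3)[of 0] by linarith
  have fin: "finite (S \<inter> Tn c x)" using assms(1) by simp
  have "\<bar>Kf c S a b x\<bar> \<le> (\<Sum>p\<in>S \<inter> Tn c x. \<bar>c ^ (a + b) * (Dh a (c * fst x - of_int (fst p)) * Dh b (c * snd x - of_int (snd p)))\<bar>)"
    unfolding Kf_local[OF assms(1)] by (rule sum_abs)
  also have "\<dots> \<le> of_nat (card (S \<inter> Tn c x)) * (c ^ (a + b) * (Ma * Mb))"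
  proof (rule sum_bounded_above)
    fix p
    have "\<bar>c ^ (a + b) * (Dh a (c * fst x - of_int (fst p)) * Dh b (c * snd x - of_int (snd p)))\<bar>
        = c ^ (a + b) * (\<bar>Dh a (c * fst x - of_int (fst p))\<bar> * \<bar>Dh b (c * snd x - of_int (snd p))\<bar>)"
      using assms(2) by (simp add: abs_mult)
    also have "\<dots> \<le> c ^ (a + b) * (Ma * Mb)"
      using assms(2,3,4) Ma by (intro mult_left_mono mult_mono) auto
    finally show "\<bar>c ^ (a + b) * (Dh a (c * fst x - of_int (fst p)) * Dh b (c * snd x - of_int (snd p)))\<bar> \<le> c ^ (a + b) * (Ma * Mb)" .
  qed
  also have "\<dots> \<le> 9 * (c ^ (a + b) * (Ma * Mb))"
  proof (rule mult_right_mono)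
    have "card (S \<inter> Tn c x) \<le> card (Tn c x)"
      by (rule card_mono) (auto simp: Tn_def finite_near)
    also have "\<dots> = card (near (c * fst x)) * card (near (c * snd x))"
      by (simp add: Tn_def card_cartesian_product)
    also have "\<dots> \<le> 3 * 3" by (intro mult_mono card_near) auto
    finally show "real (card (S \<inter> Tn c x)) \<le> 9" by simp
    show "0 \<le> c ^ (a + b) * (Ma * Mb)" using assms(2,4) Ma
      by (intro mult_nonneg_nonneg) (auto intro: order_trans[OF abs_ge_zero])
  qed
  finally show ?thesis .
qed

lemma Kf_one:
  assumes "finite S" "Tn c x \<subseteq> S"
  shows "Kf c S 0 0 x = 1"
proof -
  have "Kf c S 0 0 x = (\<Sum>p\<in>Tn c x. hb (c * fst x - of_int (fst p)) * hb (c * snd x - of_int (snd p)))"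
    unfolding Kf_local[OF assms(1)] using assms(2) by (intro sum.cong) (auto simp: Dh_def)
  also have "\<dots> = (\<Sum>i\<in>near (c * fst x). hb (c * fst x - of_int i)) * (\<Sum>j\<in>near (c * snd x). hb (c * snd x - of_int j))"
    unfolding Tn_def sum_product sum.cartesian_product by (intro sum.cong) auto
  also have "\<dots> = 1" by (simp add: sum_near)
  finally show ?thesis .
qed

lemma Kf_supp:
  assumes "Kf c S 0 0 x \<noteq> 0"
  shows "\<exists>p\<in>S. \<bar>c * fst x - of_int (fst p)\<bar> < 1 \<and> \<bar>c * snd x - of_int (snd p)\<bar> < 1"
proof -
  from assms obtain p where p: "p \<in> S" "hb (c * fst x - of_int (fst p)) * hb (c * snd x - of_int (snd p)) \<noteq> 0"
    unfolding Kf_def Dh_def by (metis (no_types, lifting) funpow_0 mult_1 power_0 sum.neutral add_0)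
  then show ?thesis using hb_zero by (intro bexI[OF _ p(1)]) (auto simp: not_less[symmetric])
qed

lemma pd_cong_open:
  assumes "open V" "\<And>y. y \<in> V \<Longrightarrow> F y = G y" "x \<in> V"
  shows "pd p q F x = pd p q G x"
proof -
  have 2: "\<forall>y\<in>V. (pd2 ^^ q) F y = (pd2 ^^ q) G y"
  proof (induction q)
    case (Suc q)
    show ?case unfolding funpow.simps comp_def
      by (intro ballI pd2_cong[OF assms(1)]) (use Suc in auto)
  qed (use assms(2) in simp)
  have 1: "\<forall>y\<in>V. (pd1 ^^ p) ((pd2 ^^ q) F) y = (pd1 ^^ p) ((pd2 ^^ q) G) y"
  proof (induction p)
    case (Suc p)
    show ?case unfolding funpow.simps comp_def
      by (intro ballI pd1_cong[OF assms(1)]) (use Suc in auto)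
  qed (use 2 in simp)
  then show ?thesis using assms(3) by (simp add: pd_def)
qed

lemma pd_zero: "pd p q (\<lambda>_. 0) = (\<lambda>_. 0)"
proof -
  have z2: "pd2 (\<lambda>_. 0) = (\<lambda>_. 0)" by (rule ext) (simp add: pd2_eq)
  have z1: "pd1 (\<lambda>_. 0) = (\<lambda>_. 0)" by (rule ext) (simp add: pd1_eq)
  have 2: "(pd2 ^^ q) (\<lambda>_. 0) = (\<lambda>_. 0)"
    by (induction q) (simp_all add: z2)
  have 1: "(pd1 ^^ p) (\<lambda>_. 0) = (\<lambda>_. 0)"
    by (induction p) (simp_all add: z1)
  show ?thesis by (simp add: pd_def 1 2)
qed

lemma geo:
  fixes k y :: "real \<times> real"
  assumes "k \<in> closure A" "dist k y < \<delta>" "A \<subseteq> B" "open B"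
    and "\<forall>x\<in>A. \<forall>z\<in>frontier B. \<delta> \<le> dist x z"
  shows "y \<in> B"
proof (rule ccontr)
  assume yB: "y \<notin> B"
  have "0 < \<delta> - dist k y" using assms(2) by simp
  then obtain x where x: "x \<in> A" "dist x k < \<delta> - dist k y"
    using assms(1) closure_approachable by metis
  have dxy: "dist x y < \<delta>" using x(2) dist_triangle[of x y k] by linarith
  have "closed_segment x y \<inter> frontier B \<noteq> {}"
    by (rule connected_Int_frontier) (use x yB assms(3) in auto)
  then obtain z where z: "z \<in> closed_segment x y" "z \<in> frontier B" by blast
  have "dist x z \<le> dist x y" using dist_in_closed_segment[OF z(1)] by (simp add: dist_commute)
  moreover have "\<delta> \<le> dist x z" using assms(5) x(1) z(2) by blast
  ultimately show False using dxy by linarith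
qed

lemma wsemi_le:
  assumes "\<And>x i j. x \<in> U \<Longrightarrow> i + j \<le> m \<Longrightarrow> norm (pd i j F x) * w x \<le> C"
  shows "wsemi w U m F \<le> ereal C"
  unfolding wsemi_def by (rule Sup_least) (use assms in auto)

lemma wsemi_elem:
  assumes "wsemi w U m F < \<infinity>" "x \<in> U" "i + j \<le> m"
  shows "norm (pd i j F x) * w x \<le> max 0 (real_of_ereal (wsemi w U m F))"
proof -
  have e: "ereal (norm (pd i j F x) * w x) \<le> wsemi w U m F"
    unfolding wsemi_def by (rule Sup_upper) (use assms(2,3) in blast)
  show ?thesis
  proof (cases "wsemi w U m F")
    case (real r)
    then show ?thesis using e by simp
  qed (use e assms(1) in auto)
qed

lemma near_close: "i \<in> near t \<Longrightarrow> \<bar>t - of_int i\<bar> < 2"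
proof -
  assume "i \<in> near t"
  then have "i = \<lfloor>t\<rfloor> - 1 \<or> i = \<lfloor>t\<rfloor> \<or> i = \<lfloor>t\<rfloor> + 1" by (auto simp: near_def)
  then have oi: "of_int i = of_int \<lfloor>t\<rfloor> - (1::real) \<or> of_int i = (of_int \<lfloor>t\<rfloor> :: real) \<or> of_int i = of_int \<lfloor>t\<rfloor> + (1::real)"
    by auto
  have f1: "of_int \<lfloor>t\<rfloor> \<le> t" and f2: "t < of_int \<lfloor>t\<rfloor> + 1" by linarith+
  show ?thesis unfolding abs_less_iff using oi f1 f2 by linarith
qed

theorem lemma4p4:
  fixes \<Omega> :: "(real \<times> real) set"
    and \<Omega>n :: "nat \<Rightarrow> (real \<times> real) set"
    and \<nu> :: "nat \<Rightarrow> real \<times> real \<Rightarrow> real"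
    and I1 :: "nat \<Rightarrow> nat"
    and n :: nat
  assumes "open \<Omega>"
    and "\<And>k. open (\<Omega>n k)"
    and "\<And>k. \<Omega>n k \<noteq> {}"
    and "\<And>k. \<Omega>n k \<noteq> UNIV"
    and "\<And>k. \<Omega>n k \<subseteq> \<Omega>n (Suc k)"
    and "\<Omega> = (\<Union>k. \<Omega>n k)"
    and "\<And>j k. j < k \<Longrightarrow> \<exists>\<delta>>0. \<forall>x\<in>\<Omega>n j. \<forall>y\<in>frontier (\<Omega>n k). \<delta> \<le> dist x y"
    and "\<And>k. continuous_on \<Omega> (\<nu> k)"
    and "\<And>k x. x \<in> \<Omega> \<Longrightarrow> 0 < \<nu> k x"
    and "\<And>k x. x \<in> \<Omega> \<Longrightarrow> \<nu> k x \<le> \<nu> (Suc k) x"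
    and "\<And>k. I1 k > k"
    and "\<And>k \<epsilon>. \<epsilon> > 0 \<Longrightarrow> \<exists>K. compact K \<and> K \<subseteq> closure (\<Omega>n k) \<and>
            (\<forall>x \<in> \<Omega>n k - K. \<nu> k x \<le> \<epsilon> * \<nu> (I1 k) x)"
  shows "\<forall>f \<in> Enu (\<nu> (I1 n)) (\<Omega>n (I1 n)). \<forall>m. \<forall>\<epsilon>>0.
           \<exists>\<phi> \<in> Dtest (\<Omega>n (I1 n)). wsemi (\<nu> n) (\<Omega>n n) m (\<lambda>x. \<phi> x - f x) < ereal \<epsilon>"
proof (intro ballI allI impI)
  fix f m and \<epsilon> :: real
  assume fE: "f \<in> Enu (\<nu> (I1 n)) (\<Omega>n (I1 n))" and eps: "\<epsilon> > 0"
  define I where "I = I1 n"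
  define U where "U = \<Omega>n I"
  have nI: "n < I" using assms(11) I_def by simp
  have UO: "open U" using assms(2) U_def by simp
  have sub: "\<Omega>n n \<subseteq> U" unfolding U_def using lift_Suc_mono_le[of \<Omega>n, OF assms(5)] nI by simp
  have UOm: "U \<subseteq> \<Omega>" using assms(6) U_def by auto
  have sf: "smooth_on_set U f" and fW: "\<And>m. wsemi (\<nu> I) U m f < \<infinity>"
    using fE by (auto simp: Enu_def U_def I_def)
  obtain \<delta> where \<delta>: "\<delta> > 0" "\<forall>x\<in>\<Omega>n n. \<forall>y\<in>frontier (\<Omega>n I). \<delta> \<le> dist x y"
    using assms(7)[OF nI] by blast
  have G: "y \<in> U" if "k \<in> closure (\<Omega>n n)" "dist k y < \<delta>" for k y
    by (rule geo[OF that sub UO]) (use \<delta>(2) U_def in simp)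
  define c where "c = 16 / \<delta>"
  have c: "c > 0" using \<delta> c_def by simp
  have "\<forall>a. \<exists>Ma. \<forall>t. \<bar>Dh a t\<bar> \<le> Ma" using Dh_bound by blast
  then obtain M where M: "\<And>a t. \<bar>Dh a t\<bar> \<le> M a" by metis
  have M0: "0 \<le> M a" for a using M[of a 0] by linarith
  define R where "R = 1 + (\<Sum>a\<le>m. \<Sum>b\<le>m. 9 * (c ^ (a + b) * (M a * M b)))"
  define W where "W = max 0 (real_of_ereal (wsemi (\<nu> I) U m f))"
  have W0: "0 \<le> W" by (simp add: W_def)
  have Wb: "norm (pd p q f x) * \<nu> I x \<le> W" if "x \<in> U" "p + q \<le> m" for x p q
    using wsemi_elem[OF fW that] W_def by simp
  have R0: "0 \<le> R" unfolding R_def using c M0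
    by (intro add_nonneg_nonneg sum_nonneg mult_nonneg_nonneg) auto
  define D where "D = 2 ^ m * R * W"
  have D0: "0 \<le> D" unfolding D_def using R0 W0 by simp
  define \<epsilon>' where "\<epsilon>' = \<epsilon> / (2 * (D + 1))"
  have e'0: "\<epsilon>' > 0" using eps D0 by (simp add: \<epsilon>'_def)
  have key: "D * \<epsilon>' \<le> \<epsilon> / 2"
  proof -
    have "D * \<epsilon>' \<le> (D + 1) * \<epsilon>'" using e'0 by simp
    also have "\<dots> = \<epsilon> / 2" using D0 by (simp add: \<epsilon>'_def field_simps)
    finally show ?thesis .
  qed
  obtain K0 where K0: "compact K0" "K0 \<subseteq> closure (\<Omega>n n)" "\<forall>x\<in>\<Omega>n n - K0. \<nu> n x \<le> \<epsilon>' * \<nu> I x"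
    using assms(12)[OF e'0, of n] I_def by blast
  obtain x0 where x0: "x0 \<in> \<Omega>n n" using assms(3) by blast
  define K where "K = insert x0 K0"
  have K: "compact K" "K \<subseteq> closure (\<Omega>n n)" "K \<noteq> {}" "\<forall>x\<in>\<Omega>n n - K. \<nu> n x \<le> \<epsilon>' * \<nu> I x"
    using K0 x0 closure_subset by (auto simp: K_def)
  obtain B where B: "\<forall>k\<in>K. norm k \<le> B" using compact_imp_bounded[OF K(1)] bounded_iff by metis
  define S where "S = {p::int \<times> int. \<exists>k\<in>K. \<bar>c * fst k - of_int (fst p)\<bar> \<le> 3 \<and> \<bar>c * snd k - of_int (snd p)\<bar> \<le> 3}"
  define N where "N = \<lceil>c * B + 3\<rceil>"
  have finS: "finite S"
  proof -
    have "S \<subseteq> {-N..N} \<times> {-N..N}"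
    proof
      fix p assume "p \<in> S"
      then obtain k where k: "k \<in> K" "\<bar>c * fst k - of_int (fst p)\<bar> \<le> 3" "\<bar>c * snd k - of_int (snd p)\<bar> \<le> 3"
        by (auto simp: S_def)
      have "\<bar>fst k\<bar> \<le> norm k" using norm_fst_le[of "fst k" "snd k"] by simp
      then have f1: "\<bar>fst k\<bar> \<le> B" using B k(1) by force
      have "\<bar>snd k\<bar> \<le> norm k" using norm_snd_le[of "snd k" "fst k"] by simp
      then have f2: "\<bar>snd k\<bar> \<le> B" using B k(1) by force
      have "c * \<bar>fst k\<bar> \<le> c * B" "c * \<bar>snd k\<bar> \<le> c * B" using f1 f2 c by simp_all
      then have "\<bar>c * fst k\<bar> \<le> c * B" "\<bar>c * snd k\<bar> \<le> c * B" using c by (simp_all add: abs_mult)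
      then have "\<bar>of_int (fst p)\<bar> \<le> c * B + 3" "\<bar>of_int (snd p)\<bar> \<le> c * B + 3"
        using k(2,3) by linarith+
      moreover have "c * B + 3 \<le> of_int N" unfolding N_def by (rule le_of_int_ceiling)
      ultimately have "of_int \<bar>fst p\<bar> \<le> (of_int N :: real)" "of_int \<bar>snd p\<bar> \<le> (of_int N :: real)"
        by simp_all
      then have "\<bar>fst p\<bar> \<le> N" "\<bar>snd p\<bar> \<le> N" by linarith+
      then show "p \<in> {-N..N} \<times> {-N..N}" by (cases p) auto
    qed
    then show ?thesis by (rule finite_subset) simp
  qed
  define chi where "chi = (\<lambda>x. complex_of_real (Kd c S 0 0 0 x))"
  define rho where "rho = (\<lambda>x. complex_of_real (Kd c S 1 0 0 x))"
  define psi where "psi = (\<lambda>x. chi x * f x)"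
  have rhof: "(\<lambda>x. psi x - f x) = (\<lambda>x. rho x * f x)"
    by (rule ext) (simp add: psi_def chi_def rho_def Kd_def algebra_simps)
  have schi: "smooth_on_set U chi" unfolding chi_def by (rule smooth_Kd)
  have srho: "smooth_on_set U rho" unfolding rho_def by (rule smooth_Kd)
  define Z where "Z = {x. infdist x K \<le> \<delta> / 2}"
  have Zc: "closed Z" unfolding Z_def
    by (intro closed_Collect_le continuous_on_infdist continuous_on_id continuous_on_const)
  have nearK: "\<exists>k\<in>K. dist x k = infdist x K" for x
    using infdist_attains_inf[OF compact_imp_closed[OF K(1)] K(3), of x] by metis
  have ZU: "Z \<subseteq> U"
  proof
    fix x assume xZ: "x \<in> Z"
    obtain k where k: "k \<in> K" "dist x k = infdist x K" using nearK by blast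
    have "dist k x < \<delta>" using xZ k \<delta>(1) by (simp add: Z_def dist_commute)
    then show "x \<in> U" using G K(2) k(1) by blast
  qed
  have Zb: "bounded Z"
    unfolding bounded_iff
  proof (intro exI ballI)
    fix x assume xZ: "x \<in> Z"
    obtain k where k: "k \<in> K" "dist x k = infdist x K" using nearK by blast
    have "norm x \<le> norm k + norm (x - k)" by (rule norm_triangle_sub)
    also have "\<dots> \<le> B + \<delta> / 2" using B k xZ by (simp add: Z_def dist_norm add_mono)
    finally show "norm x \<le> B + \<delta> / 2" .
  qed
  have Zcomp: "compact Z" using Zc Zb compact_eq_bounded_closed by blast
  have supp: "{x \<in> U. psi x \<noteq> 0} \<subseteq> Z"
  proof
    fix x assume "x \<in> {x \<in> U. psi x \<noteq> 0}"
    then have "Kf c S 0 0 x \<noteq> 0" by (auto simp: psi_def chi_def Kd_def)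
    from Kf_supp[OF this] obtain p where p: "p \<in> S" "\<bar>c * fst x - of_int (fst p)\<bar> < 1" "\<bar>c * snd x - of_int (snd p)\<bar> < 1"
      by blast
    from p(1) obtain k where k: "k \<in> K" "\<bar>c * fst k - of_int (fst p)\<bar> \<le> 3" "\<bar>c * snd k - of_int (snd p)\<bar> \<le> 3"
      by (auto simp: S_def)
    have "\<bar>c * fst x - c * fst k\<bar> < 4" "\<bar>c * snd x - c * snd k\<bar> < 4" using p(2,3) k(2,3) by linarith+
    moreover have "c * \<bar>fst x - fst k\<bar> = \<bar>c * fst x - c * fst k\<bar>" "c * \<bar>snd x - snd k\<bar> = \<bar>c * snd x - c * snd k\<bar>"
      using c by (simp_all add: abs_mult right_diff_distrib[symmetric])
    ultimately have "c * \<bar>fst x - fst k\<bar> < 4" "c * \<bar>snd x - snd k\<bar> < 4" by simp_all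
    then have a: "\<bar>fst x - fst k\<bar> < \<delta> / 4" "\<bar>snd x - snd k\<bar> < \<delta> / 4" using \<delta>(1)
      by (simp_all add: c_def field_simps)
    have "dist x k = norm (fst x - fst k, snd x - snd k)" by (cases x, cases k) (simp add: dist_norm)
    also have "\<dots> \<le> norm (fst x - fst k) + norm (snd x - snd k)" by (rule norm_Pair_le)
    also have "\<dots> < \<delta> / 2" using a by simp
    finally have "infdist x K < \<delta> / 2" using infdist_le[OF k(1), of x] by linarith
    then show "x \<in> Z" by (simp add: Z_def)
  qed
  have clZ: "closure {x \<in> U. psi x \<noteq> 0} \<subseteq> Z" by (rule closure_minimal[OF supp Zc])
  have Dt: "psi \<in> Dtest U"
    unfolding Dtest_def
  proof (intro CollectI conjI)
    show "smooth_on_set U psi" unfolding psi_def by (rule smooth_mult[OF UO schi sf])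
    have "compact (Z \<inter> closure {x \<in> U. psi x \<noteq> 0})" by (rule compact_Int_closed[OF Zcomp closed_closure])
    then show "compact (closure {x \<in> U. psi x \<noteq> 0})" using clZ by (simp add: Int_absorb1)
    show "closure {x \<in> U. psi x \<noteq> 0} \<subseteq> U" using clZ ZU by blast
  qed
  define V where "V = (\<Union>k\<in>K. {y. \<bar>c * fst y - c * fst k\<bar> < 1 \<and> \<bar>c * snd y - c * snd k\<bar> < 1})"
  have VO: "open V" unfolding V_def
    by (intro open_UN ballI open_Collect_conj open_Collect_less continuous_intros)
  have rhoV: "rho y = 0" if "y \<in> V" for y
  proof -
    from that obtain k where k: "k \<in> K" "\<bar>c * fst y - c * fst k\<bar> < 1" "\<bar>c * snd y - c * snd k\<bar> < 1"
      by (auto simp: V_def)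
    have "Tn c y \<subseteq> S"
    proof
      fix p assume "p \<in> Tn c y"
      then have "fst p \<in> near (c * fst y)" "snd p \<in> near (c * snd y)" by (auto simp: Tn_def)
      then have "\<bar>c * fst y - of_int (fst p)\<bar> < 2" "\<bar>c * snd y - of_int (snd p)\<bar> < 2" by (simp_all add: near_close)
      then have "\<bar>c * fst k - of_int (fst p)\<bar> \<le> 3" "\<bar>c * snd k - of_int (snd p)\<bar> \<le> 3" using k(2,3) by linarith+
      then show "p \<in> S" using k(1) by (auto simp: S_def)
    qed
    then have "Kf c S 0 0 y = 1" by (rule Kf_one[OF finS])
    then show ?thesis by (simp add: rho_def Kd_def)
  qed
  have est: "norm (pd i j (\<lambda>x. rho x * f x) x) * \<nu> n x \<le> \<epsilon> / 2" if x: "x \<in> \<Omega>n n" "i + j \<le> m" for x i j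
  proof -
    have xU: "x \<in> U" using x sub by blast
    have xOm: "x \<in> \<Omega>" using xU UOm by blast
    have nuI: "\<nu> I x > 0" and nun: "\<nu> n x > 0" using assms(9) xOm by auto
    have Pb: "norm (pd p q f x) \<le> W / \<nu> I x" if "p + q \<le> m" for p q
      using Wb[OF xU that] nuI by (simp add: pos_le_divide_eq)
    show ?thesis
    proof (cases "x \<in> K")
      case True
      then have xV: "x \<in> V" unfolding V_def by (intro UN_I[of x]) auto
      have "pd p q rho x = pd p q (\<lambda>_. 0) x" for p q by (rule pd_cong_open[OF VO _ xV]) (rule rhoV)
      then have z: "pd p q rho x = 0" for p q by (simp add: pd_zero)
      have "norm (pd i j (\<lambda>x. rho x * f x) x) \<le> 2 ^ m * 0 * (W / \<nu> I x)"
        by (rule pd_mult_bound[OF UO srho sf xU x(2)]) (use z Pb in auto)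
      then have "pd i j (\<lambda>x. rho x * f x) x = 0" by simp
      then show ?thesis using eps by simp
    next
      case False
      then have nule: "\<nu> n x \<le> \<epsilon>' * \<nu> I x" using K(4) x(1) by blast
      have Rb: "norm (pd p q rho x) \<le> R" if pq: "p + q \<le> m" for p q
      proof -
        have "pd p q rho x = complex_of_real (Kd c S 1 p q x)" unfolding rho_def pd_Kd by simp
        then have "norm (pd p q rho x) = \<bar>Kd c S 1 p q x\<bar>" by simp
        also have "\<dots> \<le> \<bar>Kf c S p q x\<bar> + 1" unfolding Kd_def by (simp add: abs_if)
        also have "\<bar>Kf c S p q x\<bar> \<le> 9 * (c ^ (p + q) * (M p * M q))" by (rule Kf_bound[OF finS c M M])
        also have "9 * (c ^ (p + q) * (M p * M q)) \<le> (\<Sum>b\<le>m. 9 * (c ^ (p + b) * (M p * M b)))"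
          using pq c M0 by (intro member_le_sum) auto
        also have "\<dots> \<le> (\<Sum>a\<le>m. \<Sum>b\<le>m. 9 * (c ^ (a + b) * (M a * M b)))"
          using pq c M0 by (intro member_le_sum[of p "{..m}" "\<lambda>a. \<Sum>b\<le>m. 9 * (c ^ (a + b) * (M a * M b))"]
              sum_nonneg mult_nonneg_nonneg) auto
        finally show ?thesis by (simp add: R_def)
      qed
      have "norm (pd i j (\<lambda>x. rho x * f x) x) \<le> 2 ^ m * R * (W / \<nu> I x)"
        by (rule pd_mult_bound[OF UO srho sf xU x(2)]) (use Rb Pb in auto)
      then have "norm (pd i j (\<lambda>x. rho x * f x) x) * \<nu> n x \<le> 2 ^ m * R * (W / \<nu> I x) * \<nu> n x"
        using nun by (intro mult_right_mono) auto
      also have "\<dots> \<le> 2 ^ m * R * (W / \<nu> I x) * (\<epsilon>' * \<nu> I x)"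
        using nule R0 W0 nuI by (intro mult_left_mono) auto
      also have "\<dots> = D * \<epsilon>'" using nuI by (simp add: D_def field_simps)
      also have "\<dots> \<le> \<epsilon> / 2" by (rule key)
      finally show ?thesis .
    qed
  qed
  have "wsemi (\<nu> n) (\<Omega>n n) m (\<lambda>x. psi x - f x) \<le> ereal (\<epsilon> / 2)"
    unfolding rhof by (rule wsemi_le) (rule est)
  also have "\<dots> < ereal \<epsilon>" using eps by simp
  finally have "wsemi (\<nu> n) (\<Omega>n n) m (\<lambda>x. psi x - f x) < ereal \<epsilon>" .
  then show "\<exists>\<phi>\<in>Dtest (\<Omega>n (I1 n)). wsemi (\<nu> n) (\<Omega>n n) m (\<lambda>x. \<phi> x - f x) < ereal \<epsilon>"
    using Dt by (auto simp: U_def I_def)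
qed


end
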